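(* Let $\delta\in\{1,-1\}$ and let $\alpha,\beta,\gamma\in\mathbb{Z}[i]$ satisfy $\alpha^2+(1+\delta i)\beta^2+\gamma^2=0$, $\alpha\beta\gamma\neq0$ and $\gcd(\alpha,\beta,\gamma)\in U$. Then $\beta\equiv0\pmod{(1+i)^2}$.
   Context: $\mathbb{Z}[i]$ is the ring of Gaussian integers, $U=\{1,-1,i,-i\}$ its unit group; $\gcd(\alpha,\beta,\gamma)\in U$ means no common non-unit divisor. *)

theory Defs
  imports Complex_Main
begin

definition gauss_ints :: "complex set" where
  "gauss_ints = {z. Re z \<in> \<int> \<and> Im z \<in> \<int>}"

definition gdvd :: "complex \<Rightarrow> complex \<Rightarrow> bool" where
  "gdvd a b \<longleftrightarrow> (\<exists>k\<in>gauss_ints. b = a * k)"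

definition gunits :: "complex set" where
  "gunits = {1, -1, \<i>, -\<i>}"

text \<open>gcd(a,b,c) in U: every common divisor in Z[i] is a unit.\<close>
definition gcd3_unit :: "complex \<Rightarrow> complex \<Rightarrow> complex \<Rightarrow> bool" where
  "gcd3_unit a b c \<longleftrightarrow>
     (\<forall>d\<in>gauss_ints. gdvd d a \<and> gdvd d b \<and> gdvd d c \<longrightarrow> d \<in> gunits)"

end

theory Submission
  imports Defs
begin

lemma aux1: fixes M N G H :: int assumes "odd G" "8 dvd H" "2*M + 2*G + H + 2*N = 0" shows "odd (M+N)"
  using assms by presburger

lemma aux2: fixes A B E F K C D :: int assumes "4 dvd A - B" "E mod 4 = 0 \<or> E mod 4 = 1" "F mod 4 = 0 \<or> F mod 4 = 1"
  "odd K" "8 dvd C - D" "A - B + C - D - 2*K + E - F = 0" shows False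
  using assms by presburger

lemma sq4: "(x::int)^2 mod 4 = 0 \<or> (x::int)^2 mod 4 = 1"
proof (cases "even x")
  case True then obtain p where "x = 2*p" by blast
  then show ?thesis by (simp add: power2_eq_square)
next
  case False then obtain p where p: "x = 2*p+1" using oddE by blast
  define q where "q = p*p+p"
  have "x^2 = 4*q + 1" unfolding p q_def by (simp add: power2_eq_square algebra_simps)
  then show ?thesis by simp
qed

lemma sq8: "odd (x::int) \<Longrightarrow> 8 dvd x^2 - 1"
proof -
  assume "odd x"
  then obtain p where p: "x = 2*p+1" using oddE by blast
  have "even (p*p+p)" by simp
  then obtain q where q: "p*p+p = 2*q" by blast
  have "x^2 - 1 = 8*q" unfolding p using q by (simp add: power2_eq_square algebra_simps)
  then show ?thesis by simp
qed

lemma int_main: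
  fixes a b c d e f \<delta> :: int
  assumes d: "\<delta> \<in> {1, -1}"
    and E1: "a^2 - b^2 + c^2 - d^2 - 2*\<delta>*c*d + e^2 - f^2 = 0"
    and E2: "2*a*b + 2*c*d + \<delta>*(c^2 - d^2) + 2*e*f = 0"
  shows "even c \<and> even d"
proof -
  have dd: "odd \<delta>" using d by auto
  have "even (\<delta>*(c^2 - d^2))"
  proof -
    have "\<delta>*(c^2 - d^2) = 2*(- a*b - c*d - e*f)" using E2 by (simp add: algebra_simps)
    then show ?thesis by simp
  qed
  then have "even (c^2 - d^2)" using dd by simp
  then have par: "even c \<longleftrightarrow> even d" by auto
  show ?thesis
  proof (rule ccontr)
    assume "\<not> (even c \<and> even d)"
    then have oc: "odd c" and od: "odd d" using par by auto
    have G: "odd (c*d)" using oc od by simp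
    have K: "odd (\<delta>*c*d)" using oc od dd by simp
    have CD: "8 dvd c^2 - d^2"
    proof -
      have "c^2 - d^2 = (c^2 - 1) - (d^2 - 1)" by simp
      then show ?thesis using sq8[OF oc] sq8[OF od] by (metis dvd_diff)
    qed
    have H: "8 dvd \<delta>*(c^2 - d^2)" using CD by simp
    have "2*(a*b) + 2*(c*d) + \<delta>*(c^2 - d^2) + 2*(e*f) = 0" using E2 by (simp add: algebra_simps)
    then have "odd (a*b + e*f)" using aux1[OF G H] by blast
    then have "odd (a*b) \<or> odd (e*f)" by auto
    then show False
    proof
      assume "odd (a*b)"
      then have "odd a" "odd b" by auto
      then have "8 dvd (a^2 - 1) - (b^2 - 1)" using sq8 by (metis dvd_diff)
      then have "8 dvd a^2 - b^2" by simp
      then have "4 dvd a^2 - b^2" by (rule dvd_trans[rotated]) simp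
      then show False using aux2[OF _ sq4 sq4 K CD, of "a^2" "b^2" e f] E1 by (simp add: algebra_simps)
    next
      assume "odd (e*f)"
      then have "odd e" "odd f" by auto
      then have "8 dvd (e^2 - 1) - (f^2 - 1)" using sq8 by (metis dvd_diff)
      then have "8 dvd e^2 - f^2" by simp
      then have "4 dvd e^2 - f^2" by (rule dvd_trans[rotated]) simp
      then show False using aux2[OF _ sq4 sq4 K CD, of "e^2" "f^2" a b] E1 by (simp add: algebra_simps)
    qed
  qed
qed


lemma gauss_obtain:
  assumes "z \<in> gauss_ints" obtains x y :: int where "z = Complex (of_int x) (of_int y)"
proof -
  from assms obtain x where x: "Re z = of_int x" unfolding gauss_ints_def by (auto elim: Ints_cases)
  from assms obtain y where y: "Im z = of_int y" unfolding gauss_ints_def by (auto elim: Ints_cases)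
  show ?thesis using that[of x y] x y by (simp add: complex_eq_iff)
qed

theorem lemma4p12:
  fixes \<delta> :: int and \<alpha> \<beta> \<gamma> :: complex
  assumes "\<delta> \<in> {1, -1}"
    and "\<alpha> \<in> gauss_ints" and "\<beta> \<in> gauss_ints" and "\<gamma> \<in> gauss_ints"
    and "\<alpha>\<^sup>2 + (1 + of_int \<delta> * \<i>) * \<beta>\<^sup>2 + \<gamma>\<^sup>2 = 0"
    and "\<alpha> * \<beta> * \<gamma> \<noteq> 0"
    and "gcd3_unit \<alpha> \<beta> \<gamma>"
  shows "gdvd ((1 + \<i>)\<^sup>2) \<beta>"
proof -
  obtain a b where A: "\<alpha> = Complex (of_int a) (of_int b)" using gauss_obtain[OF assms(2)] .
  obtain c d where B: "\<beta> = Complex (of_int c) (of_int d)" using gauss_obtain[OF assms(3)] .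
  obtain e f where C: "\<gamma> = Complex (of_int e) (of_int f)" using gauss_obtain[OF assms(4)] .
  have R: "Re (\<alpha>\<^sup>2 + (1 + of_int \<delta> * \<i>) * \<beta>\<^sup>2 + \<gamma>\<^sup>2) = 0" and I: "Im (\<alpha>\<^sup>2 + (1 + of_int \<delta> * \<i>) * \<beta>\<^sup>2 + \<gamma>\<^sup>2) = 0"
    using assms(5) by simp_all
  have "real_of_int (a^2 - b^2 + c^2 - d^2 - 2*\<delta>*c*d + e^2 - f^2) = 0"
    using R unfolding A B C by (simp add: power2_eq_square algebra_simps)
  then have E1: "a^2 - b^2 + c^2 - d^2 - 2*\<delta>*c*d + e^2 - f^2 = 0" by linarith
  have "real_of_int (2*a*b + 2*c*d + \<delta>*(c^2 - d^2) + 2*e*f) = 0"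
    using I unfolding A B C by (simp add: power2_eq_square algebra_simps)
  then have E2: "2*a*b + 2*c*d + \<delta>*(c^2 - d^2) + 2*e*f = 0" by linarith
  from int_main[OF assms(1) E1 E2] obtain c' d' where c': "c = 2*c'" and d': "d = 2*d'" by blast
  show ?thesis unfolding gdvd_def
  proof (rule bexI[of _ "Complex (of_int d') (- of_int c')"])
    show "Complex (of_int d') (- of_int c') \<in> gauss_ints" unfolding gauss_ints_def by simp
    show "\<beta> = (1 + \<i>)\<^sup>2 * Complex (of_int d') (- of_int c')"
      unfolding B c' d' by (simp add: complex_eq_iff power2_eq_square)
  qed
qed

end
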